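(* For $R>1$ let $s(R)>0$ be the unique positive number with $g_R(s(R))=s(R)$. Then $R\mapsto s(R)$ is strictly decreasing on $(1,\infty)$, and $$\lim_{R\to1^+}s(R)=\infty,\qquad\lim_{R\to\infty}s(R)=0.$$
   Context: For $R>1$, $g_R$ is the unique solution on $[0,\infty)$ of the initial value problem $$y'(w)=\frac{\arccos\!\big(\frac{w}{Ry}\big)-\arccos\!\big(\frac{w}{y}\big)\mathbf 1_{\{|w|\le|y|\}}}{R\sqrt{1-\big(\frac{w}{Ry}\big)^2}-\sqrt{1-\big(\frac{w}{y}\big)^2}\,\mathbf 1_{\{|w|\le|y|\}}},\qquad y(0)=\frac{\pi}{R-1}.$$ The function $w\mapsto w/g_R(w)$ is strictly increasing on $(0,\infty)$ with limit $0$ at $0$ and limit $R$ at $\infty$, so $s(R)$ (the unique $w>0$ with $w/g_R(w)=1$) is well defined. *)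

theory Defs
  imports "HOL-Analysis.Analysis"
begin

definition ind_le :: "real \<Rightarrow> real \<Rightarrow> real" where
  "ind_le w y = (if \<bar>w\<bar> \<le> \<bar>y\<bar> then 1 else 0)"

definition gF :: "real \<Rightarrow> real \<Rightarrow> real \<Rightarrow> real" where
  "gF R w y =
     (arccos (w / (R * y)) - arccos (w / y) * ind_le w y) /
     (R * sqrt (1 - (w / (R * y))\<^sup>2) - sqrt (1 - (w / y)\<^sup>2) * ind_le w y)"

definition g_solution :: "real \<Rightarrow> (real \<Rightarrow> real) \<Rightarrow> bool" where
  "g_solution R y \<longleftrightarrow>
     y 0 = pi / (R - 1) \<and>
     (\<forall>w\<ge>0. (y has_real_derivative gF R w (y w)) (at w within {0..}))"

definition g :: "real \<Rightarrow> real \<Rightarrow> real" where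
  "g R w = (THE v. \<exists>y. g_solution R y \<and> y w = v)"

definition s :: "real \<Rightarrow> real" where
  "s R = (THE w. w > 0 \<and> g R w = w)"

end

theory Submission
  imports Defs
begin


definition EE :: "real \<Rightarrow> real" where "EE x = sqrt (1 - x\<^sup>2) - x * arccos x"
definition E1 :: "real \<Rightarrow> real" where "E1 t = EE (min t 1)"
definition DD :: "real \<Rightarrow> real \<Rightarrow> real" where "DD R t = R * EE (t / R) - E1 t"
definition NN :: "real \<Rightarrow> real \<Rightarrow> real" where "NN R t = arccos (t / R) - arccos (min t 1)"
definition MM :: "real \<Rightarrow> real \<Rightarrow> real" where "MM R t = R * sqrt (1 - (t / R)\<^sup>2) - sqrt (1 - (min t 1)\<^sup>2)"

lemma EE_deriv:
  assumes "-1 < x" "x < 1"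
  shows "(EE has_real_derivative - arccos x) (at x)"
proof -
  have s: "sqrt (1 - x\<^sup>2) > 0" using assms by (simp add: abs_square_less_1)
  have "((\<lambda>x. sqrt (1 - x\<^sup>2) - x * arccos x) has_real_derivative
     (inverse (sqrt (1 - x\<^sup>2)) / 2 * (- (2 * x)) - (arccos x + x * inverse (- sqrt (1 - x\<^sup>2))))) (at x)"
    using s assms
    by (auto intro!: derivative_eq_intros DERIV_arccos simp: power2_eq_square)
  moreover have "inverse (sqrt (1 - x\<^sup>2)) / 2 * (- (2 * x)) - (arccos x + x * inverse (- sqrt (1 - x\<^sup>2))) = - arccos x"
    using s by (simp add: field_simps)
  ultimately show ?thesis unfolding EE_def[abs_def] by simp
qed

lemma EE_cont: "continuous_on {-1..1} EE"
  unfolding EE_def[abs_def]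
  by (intro continuous_intros) auto

lemma EE_1 [simp]: "EE 1 = 0" by (simp add: EE_def)
lemma EE_0 [simp]: "EE 0 = 1" by (simp add: EE_def)

lemma EE_strict_dec:
  assumes "-1 \<le> a" "a < b" "b \<le> 1"
  shows "EE b < EE a"
proof -
  have "(\<lambda>x. - EE x) a < (\<lambda>x. - EE x) b"
  proof (rule DERIV_pos_imp_increasing_open[OF assms(2)])
    fix x assume "a < x" "x < b"
    hence "-1 < x" "x < 1" using assms by auto
    thus "\<exists>y. ((\<lambda>x. - EE x) has_real_derivative y) (at x) \<and> 0 < y"
      using EE_deriv[of x] arccos_lt_bounded[of x]
      by (intro exI[of _ "arccos x"]) (auto intro!: derivative_eq_intros)
  next
    show "continuous_on {a..b} (\<lambda>x. - EE x)"
      using continuous_on_subset[OF EE_cont, of "{a..b}"] assms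
      by (auto intro!: continuous_intros)
  qed
  thus ?thesis by simp
qed

lemma EE_minus:
  assumes "-1 \<le> x" "x \<le> 1"
  shows "EE (-x) = EE x + pi * x"
  using assms by (simp add: EE_def arccos_minus algebra_simps)

lemma E1_deriv:
  assumes "-1 < t"
  shows "(E1 has_real_derivative - arccos (min t 1)) (at t)"
proof (cases "t < 1")
  case True
  have "(EE has_real_derivative - arccos t) (at t)" using EE_deriv assms True by auto
  hence "(E1 has_real_derivative - arccos t) (at t)"
    by (rule has_field_derivative_transform_within_open[of _ _ _ "{..<1}"]) (use True in \<open>auto simp: E1_def\<close>)
  thus ?thesis using True by simp
next
  case False
  show ?thesis
  proof (cases "t = 1")
    case False
    hence t: "t > 1" using \<open>\<not> t < 1\<close> by auto
    have "((\<lambda>_. 0::real) has_real_derivative 0) (at t)" by simp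
    hence "(E1 has_real_derivative 0) (at t)"
      by (rule has_field_derivative_transform_within_open[of _ _ _ "{1<..}"]) (use t in \<open>auto simp: E1_def\<close>)
    thus ?thesis using t by simp
  next
    case True
    have "((\<lambda>y. (E1 y - E1 1) / (y - 1)) \<longlongrightarrow> 0) (at_right 1)"
    proof (rule tendsto_eventually)
      show "\<forall>\<^sub>F y in at_right 1. (E1 y - E1 1) / (y - 1) = 0"
        using eventually_at_right_less[of 1] by (rule eventually_mono) (simp add: E1_def)
    qed
    moreover have "((\<lambda>y. (E1 y - E1 1) / (y - 1)) \<longlongrightarrow> 0) (at_left 1)"
    proof (rule tendsto_sandwich)
      have ev: "\<forall>\<^sub>F y in at_left 1. - arccos y \<le> (E1 y - E1 1) / (y - 1)
                \<and> (E1 y - E1 1) / (y - 1) \<le> 0"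
      proof -
        have "\<forall>\<^sub>F y in at_left 1. (y::real) \<in> {0<..<1}"
          by (rule eventually_at_left_real) simp
        thus ?thesis
        proof (rule eventually_mono)
          fix y :: real assume "y \<in> {0<..<1}"
          hence y: "0 < y \<and> y < 1" by simp
          obtain l z where z: "y < z" "z < 1" "DERIV EE z :> l" "EE 1 - EE y = (1 - y) * l"
            using MVT[of y 1 EE] y continuous_on_subset[OF EE_cont, of "{y..1}"] EE_deriv
            by (force simp: real_differentiable_def)
          have l: "l = - arccos z" using DERIV_unique[OF z(3) EE_deriv[of z]] y z by auto
          have q: "(E1 y - E1 1) / (y - 1) = - arccos z"
            using z l y by (simp add: E1_def field_simps)
          have "arccos z \<le> arccos y" using z y by (intro arccos_le_arccos) auto
          moreover have "0 \<le> arccos z" using z y by (intro arccos_lbound) auto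
          ultimately show "- arccos y \<le> (E1 y - E1 1) / (y - 1) \<and> (E1 y - E1 1) / (y - 1) \<le> 0"
            using q by auto
        qed
      qed
      show "\<forall>\<^sub>F y in at_left 1. - arccos y \<le> (E1 y - E1 1) / (y - 1)"
        using ev by (rule eventually_mono) auto
      show "\<forall>\<^sub>F y in at_left 1. (E1 y - E1 1) / (y - 1) \<le> 0"
        using ev by (rule eventually_mono) auto
    next
      show "((\<lambda>y. - arccos y) \<longlongrightarrow> 0) (at_left 1)"
      proof -
        have "((\<lambda>y. arccos y) \<longlongrightarrow> arccos 1) (at_left 1)"
        proof (rule continuous_on_tendsto_compose[OF continuous_on_arccos'])
          show "((\<lambda>x. x) \<longlongrightarrow> 1) (at_left (1::real))" by (rule tendsto_ident_at)
          show "\<forall>\<^sub>F x in at_left 1. x \<in> {- 1..1::real}"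
            by (rule eventually_mono[OF eventually_at_left_real[of "-1::real" 1]]) auto
        qed auto
        thus ?thesis using tendsto_minus by fastforce
      qed
    qed auto
    ultimately have "((\<lambda>y. (E1 y - E1 1) / (y - 1)) \<longlongrightarrow> 0) (at 1)"
      by (simp add: filterlim_at_split)
    hence "(E1 has_real_derivative 0) (at 1)"
      by (simp add: has_field_derivative_iff)
    thus ?thesis using True by simp
  qed
qed


lemma DD_deriv:
  assumes R: "R > 1" and t: "-1 < t" "t < R"
  shows "(DD R has_real_derivative - NN R t) (at t)"
proof -
  have tr: "-1 < t / R" "t / R < 1" using R t by (auto simp: field_simps)
  have "((\<lambda>x. EE (x / R)) has_real_derivative (- arccos (t/R)) * (1 / R)) (at t)"
    by (rule DERIV_chain2[where g="\<lambda>x. x / R", OF EE_deriv[OF tr]]) (use R in \<open>auto intro!: derivative_eq_intros\<close>)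
  hence "((\<lambda>x. R * EE (x / R) - E1 x) has_real_derivative R * ((- arccos (t/R)) * (1 / R)) - (- arccos (min t 1))) (at t)"
    using E1_deriv[of t] t by (intro DERIV_diff DERIV_cmult) auto
  moreover have "R * ((- arccos (t/R)) * (1 / R)) - (- arccos (min t 1)) = - NN R t"
    using R by (simp add: NN_def)
  ultimately show ?thesis unfolding DD_def[abs_def] by simp
qed

lemma DD_cont:
  assumes R: "R > 1"
  shows "continuous_on {-1..R} (DD R)"
proof -
  have "continuous_on {-1..R} (\<lambda>x. EE (x / R))"
    by (rule continuous_on_compose2[OF EE_cont]) (use R in \<open>auto intro!: continuous_intros simp: field_simps\<close>)
  moreover have "continuous_on {-1..R} E1"
    unfolding E1_def[abs_def]
    by (rule continuous_on_compose2[OF EE_cont]) (auto intro!: continuous_intros)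
  ultimately show ?thesis unfolding DD_def[abs_def] by (intro continuous_intros)
qed

lemma DD_R: "R > 1 \<Longrightarrow> DD R R = 0" by (simp add: DD_def E1_def)
lemma DD_0: "DD R 0 = R - 1" by (simp add: DD_def E1_def)

lemma DD_eq:
  assumes R: "R > 1"
  shows "DD R t = MM R t - t * NN R t"
proof (cases "t \<le> 1")
  case True
  thus ?thesis using R by (simp add: DD_def MM_def NN_def E1_def EE_def algebra_simps)
next
  case False
  thus ?thesis using R by (simp add: DD_def MM_def NN_def E1_def EE_def algebra_simps)
qed

lemma MM_pos:
  assumes R: "R > 1" and t: "-1 < t" "t < R"
  shows "MM R t > 0"
proof (cases "t \<le> 1")
  case True
  have "R * sqrt (1 - (t / R)\<^sup>2) = sqrt (R\<^sup>2 * (1 - (t / R)\<^sup>2))"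
    using R by (simp add: real_sqrt_mult)
  also have "R\<^sup>2 * (1 - (t / R)\<^sup>2) = R\<^sup>2 - t\<^sup>2" using R by (simp add: field_simps power2_eq_square)
  finally have e: "R * sqrt (1 - (t / R)\<^sup>2) = sqrt (R\<^sup>2 - t\<^sup>2)" .
  have "1 < R\<^sup>2" using R by (simp add: one_less_power)
  hence "sqrt (1 - t\<^sup>2) < sqrt (R\<^sup>2 - t\<^sup>2)" by (intro real_sqrt_less_mono) auto
  thus ?thesis using True e by (simp add: MM_def)
next
  case False
  have "t\<^sup>2 < R\<^sup>2" using t False by (intro power_strict_mono) auto
  hence "(t / R)\<^sup>2 < 1" using R by (simp add: power_divide field_simps)
  thus ?thesis using False R by (simp add: MM_def)
qed

lemma NN_pos:
  assumes R: "R > 1" and t: "0 < t" "t < R"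
  shows "NN R t > 0"
proof (cases "t \<le> 1")
  case True
  have "t / R < t" using R t by (simp add: field_simps)
  moreover have "-1 \<le> t / R" using R t by (simp add: field_simps)
  ultimately have "arccos t < arccos (t / R)" using True t R by (intro arccos_less_arccos) auto
  thus ?thesis using True by (simp add: NN_def)
next
  case False
  have "-1 < t / R" "t / R < 1" using R t by (auto simp: field_simps)
  hence "arccos (t / R) > 0" using arccos_lt_bounded by blast
  thus ?thesis using False by (simp add: NN_def)
qed

lemma DD_pos:
  assumes R: "R > 1" and t: "-1 < t" "t < R"
  shows "DD R t > 0"
proof -
  have *: "DD R x > 0" if x: "0 \<le> x" "x < R" for x
  proof -
    have "(\<lambda>x. - DD R x) x < (\<lambda>x. - DD R x) R"
    proof (rule DERIV_pos_imp_increasing_open[OF x(2)])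
      fix z assume "x < z" "z < R"
      thus "\<exists>y. ((\<lambda>x. - DD R x) has_real_derivative y) (at z) \<and> 0 < y"
        using DD_deriv[OF R, of z] NN_pos[OF R, of z] x
        by (intro exI[of _ "NN R z"]) (auto intro!: derivative_eq_intros)
    next
      show "continuous_on {x..R} (\<lambda>x. - DD R x)"
        using continuous_on_subset[OF DD_cont[OF R], of "{x..R}"] x
        by (auto intro!: continuous_intros)
    qed
    thus ?thesis using DD_R[OF R] by simp
  qed
  show ?thesis
  proof (cases "t \<ge> 0")
    case True thus ?thesis using * t by auto
  next
    case False
    have "DD R t = DD R (-t)"
    proof -
      have a: "EE (t / R) = EE (-t/R) - pi * (t / R)"
        using EE_minus[of "-t/R"] R t False by (auto simp: field_simps)
      have b: "EE t = EE (-t) - pi * t" using EE_minus[of "-t"] t False by auto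
      show ?thesis using a b R False t by (simp add: DD_def E1_def field_simps)
    qed
    thus ?thesis using *[of "-t"] False t R by auto
  qed
qed


definition WW :: "real \<Rightarrow> real \<Rightarrow> real" where "WW R u = u * pi / DD R u"
definition UU :: "real \<Rightarrow> real \<Rightarrow> real" where
  "UU R w = (THE u. u \<in> {-1/2..<R} \<and> WW R u = w)"
definition YY :: "real \<Rightarrow> real \<Rightarrow> real" where "YY R w = pi / DD R (UU R w)"

lemma WW_deriv:
  assumes R: "R > 1" and t: "-1 < t" "t < R"
  shows "(WW R has_real_derivative pi * MM R t / (DD R t)\<^sup>2) (at t)"
proof -
  have p: "DD R t > 0" using DD_pos[OF R t] .
  have "((\<lambda>u. u * pi / DD R u) has_real_derivative
      ((1 * pi) * DD R t - (t * pi) * (- NN R t)) / (DD R t * DD R t)) (at t)"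
    using p DD_deriv[OF R t] by (intro DERIV_divide DERIV_cmult) (auto intro!: derivative_eq_intros)
  moreover have "((1 * pi) * DD R t - (t * pi) * (- NN R t)) / (DD R t * DD R t) = pi * MM R t / (DD R t)\<^sup>2"
    unfolding DD_eq[OF R, of t] by (simp add: power2_eq_square field_simps)
  ultimately show ?thesis unfolding WW_def[abs_def] by simp
qed

lemma WW_mono:
  assumes R: "R > 1" and ab: "-1 < a" "a < b" "b < R"
  shows "WW R a < WW R b"
proof (rule DERIV_pos_imp_increasing[OF ab(2)])
  fix x assume "a \<le> x" "x \<le> b"
  hence x: "-1 < x" "x < R" using ab by auto
  show "\<exists>y. (WW R has_real_derivative y) (at x) \<and> 0 < y"
    using WW_deriv[OF R x] MM_pos[OF R x] DD_pos[OF R x]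
    by (intro exI[of _ "pi * MM R x / (DD R x)\<^sup>2"]) auto
qed

lemma WW_isCont:
  assumes R: "R > 1" and t: "-1 < t" "t < R"
  shows "isCont (WW R) t"
  using WW_deriv[OF R t] by (rule DERIV_isCont)

lemma WW_0 [simp]: "WW R 0 = 0" by (simp add: WW_def)

lemma WW_neg: "R > 1 \<Longrightarrow> WW R (-1/2) < 0"
  using WW_mono[of R "-1/2" 0] by simp

lemma WW_big:
  assumes R: "R > 1" and w: "w \<ge> 0"
  shows "\<exists>b. 0 \<le> b \<and> b < R \<and> w \<le> WW R b"
proof -
  have "(DD R \<longlongrightarrow> DD R R) (at_left R)"
  proof -
    have "\<forall>\<^sub>F x in at_left R. x \<in> {- 1..R}"
      by (rule eventually_mono[OF eventually_at_left_real[of "-1" R]]) (use R in auto)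
    thus ?thesis
      using continuous_on_tendsto_compose[OF DD_cont[OF R] tendsto_ident_at[of R "{..<R}"]] R by auto
  qed
  hence "(DD R \<longlongrightarrow> 0) (at_left R)" using DD_R[OF R] by simp
  hence "\<forall>\<^sub>F x in at_left R. DD R x < (R / 2) * pi / (w + 1)"
    using w R by (intro order_tendstoD) auto
  moreover have "\<forall>\<^sub>F x in at_left R. x \<in> {R/2<..<R}"
    using R by (intro eventually_at_left_real) auto
  ultimately have "\<forall>\<^sub>F x in at_left R. DD R x < (R / 2) * pi / (w + 1) \<and> x \<in> {R/2<..<R}"
    by (rule eventually_conj)
  then obtain b where b: "DD R b < (R / 2) * pi / (w + 1)" "b \<in> {R/2<..<R}"
    using eventually_happens trivial_limit_at_left_real[of R] by blast
  have bpos: "DD R b > 0" using DD_pos[OF R, of b] b R by auto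
  have "w < (R/2) * pi / DD R b"
    using b bpos w by (simp add: field_simps)
  also have "\<dots> \<le> b * pi / DD R b"
    using b bpos by (intro divide_right_mono mult_right_mono) auto
  finally show ?thesis using b R unfolding WW_def by (intro exI[of _ b]) auto
qed

lemma WW_surj:
  assumes R: "R > 1" and w: "WW R (-1/2) \<le> w"
  shows "\<exists>u. u \<in> {-1/2..<R} \<and> WW R u = w"
proof (cases "w \<le> 0")
  case True
  have "\<exists>x\<ge>-1/2. x \<le> 0 \<and> WW R x = w"
    by (rule IVT) (use w True WW_isCont[OF R] R in auto)
  thus ?thesis using R by force
next
  case False
  then obtain b where b: "0 \<le> b" "b < R" "w \<le> WW R b" using WW_big[OF R, of w] by auto
  have "\<exists>x\<ge>0. x \<le> b \<and> WW R x = w"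
    by (rule IVT) (use w False b WW_isCont[OF R] R in auto)
  then obtain x where "0 \<le> x" "x \<le> b" "WW R x = w" by blast
  thus ?thesis using b by (intro exI[of _ x]) auto
qed

lemma WW_inj:
  assumes R: "R > 1" and u: "-1 < u" "u < R" and v: "-1 < v" "v < R" and e: "WW R u = WW R v"
  shows "u = v"
  using WW_mono[OF R u(1) _ v(2)] WW_mono[OF R v(1) _ u(2)] e
  by (cases u v rule: linorder_cases) auto

lemma UU_WW:
  assumes R: "R > 1" and u: "u \<in> {-1/2..<R}"
  shows "UU R (WW R u) = u"
  unfolding UU_def
  by (rule the_equality) (use u WW_inj[OF R] in auto)

lemma UU_prop:
  assumes R: "R > 1" and w: "WW R (-1/2) \<le> w"
  shows "UU R w \<in> {-1/2..<R} \<and> WW R (UU R w) = w"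
  using WW_surj[OF R w] UU_WW[OF R] by auto

lemma UU_nonneg:
  assumes R: "R > 1" and w: "0 \<le> w"
  shows "0 \<le> UU R w"
proof (rule ccontr)
  assume "\<not> 0 \<le> UU R w"
  moreover have "UU R w \<in> {-1/2..<R} \<and> WW R (UU R w) = w"
    using UU_prop[OF R] WW_neg[OF R] w by force
  ultimately have "WW R (UU R w) < WW R 0" using WW_mono[OF R, of "UU R w" 0] R by auto
  thus False using \<open>UU R w \<in> {-1/2..<R} \<and> WW R (UU R w) = w\<close> w by simp
qed

lemma UU_isCont:
  assumes R: "R > 1" and w: "WW R (-1/2) < w"
  shows "isCont (UU R) w"
proof -
  define x where "x = UU R w"
  have x: "x \<in> {-1/2..<R}" "WW R x = w" using UU_prop[OF R] w unfolding x_def by auto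
  have "x \<noteq> -1/2" using x w by auto
  hence x2: "-1/2 < x" using x by auto
  define d where "d = min (x + 1/2) (R - x) / 2"
  have d: "0 < d" using x2 x by (auto simp: d_def)
  have "isCont (UU R) (WW R x)"
  proof (rule isCont_inverse_function[where f="WW R" and g="UU R", OF d])
    fix z assume "\<bar>z - x\<bar> \<le> d"
    hence "z - x \<le> d" "x - z \<le> d" by auto
    hence z: "z \<in> {-1/2<..<R}" using x2 x unfolding d_def by auto
    show "UU R (WW R z) = z" using UU_WW[OF R] z by auto
  next
    fix z assume "\<bar>z - x\<bar> \<le> d"
    hence "z - x \<le> d" "x - z \<le> d" by auto
    hence z: "z \<in> {-1/2<..<R}" using x2 x unfolding d_def by auto
    show "isCont (WW R) z" using WW_isCont[OF R] z by auto
  qed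
  thus ?thesis using x by simp
qed

lemma UU_deriv:
  assumes R: "R > 1" and w: "0 \<le> w"
  shows "(UU R has_real_derivative inverse (pi * MM R (UU R w) / (DD R (UU R w))\<^sup>2)) (at w)"
proof (rule DERIV_inverse_function[where a="WW R (-1/2)" and b="w+1"])
  have u: "UU R w \<in> {-1/2..<R}" using UU_prop[OF R] WW_neg[OF R] w by force
  hence u': "-1 < UU R w" "UU R w < R" by auto
  show "(WW R has_real_derivative pi * MM R (UU R w) / (DD R (UU R w))\<^sup>2) (at (UU R w))"
    by (rule WW_deriv[OF R u'])
  show "pi * MM R (UU R w) / (DD R (UU R w))\<^sup>2 \<noteq> 0"
    using MM_pos[OF R u'] DD_pos[OF R u'] by auto
  show "WW R (- 1 / 2) < w" using WW_neg[OF R] w by simp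
  show "w < w + 1" by simp
  show "\<And>y. WW R (- 1 / 2) < y \<Longrightarrow> y < w + 1 \<Longrightarrow> WW R (UU R y) = y"
    using UU_prop[OF R] by auto
  show "isCont (UU R) w" using UU_isCont[OF R] WW_neg[OF R] w by simp
qed


lemma UU_range:
  assumes R: "R > 1" and w: "0 \<le> w"
  shows "0 \<le> UU R w" "UU R w < R" "WW R (UU R w) = w"
  using UU_nonneg[OF R w] UU_prop[OF R, of w] WW_neg[OF R] w by auto

lemma YY_pos:
  assumes R: "R > 1" and w: "0 \<le> w"
  shows "YY R w > 0"
  using DD_pos[OF R, of "UU R w"] UU_range[OF R w] by (auto simp: YY_def)

lemma YY_ratio:
  assumes R: "R > 1" and w: "0 \<le> w"
  shows "w / YY R w = UU R w"
proof -
  have p: "DD R (UU R w) > 0" using DD_pos[OF R, of "UU R w"] UU_range[OF R w] by auto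
  have "w = UU R w * pi / DD R (UU R w)" using UU_range(3)[OF R w] by (simp add: WW_def)
  thus ?thesis using p by (simp add: YY_def field_simps)
qed

lemma YY_deriv:
  assumes R: "R > 1" and w: "0 \<le> w"
  shows "(YY R has_real_derivative NN R (UU R w) / MM R (UU R w)) (at w)"
proof -
  define u where "u = UU R w"
  have u: "-1 < u" "u < R" using UU_range[OF R w] unfolding u_def by auto
  have p: "DD R u > 0" "MM R u > 0" using DD_pos[OF R u] MM_pos[OF R u] by auto
  have "((\<lambda>x. DD R (UU R x)) has_real_derivative (- NN R u) * inverse (pi * MM R u / (DD R u)\<^sup>2)) (at w)"
    using DERIV_chain2[OF DD_deriv[OF R u, unfolded u_def] UU_deriv[OF R w]] unfolding u_def by simp
  hence "((\<lambda>x. pi / DD R (UU R x)) has_real_derivative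
     (0 * DD R u - pi * ((- NN R u) * inverse (pi * MM R u / (DD R u)\<^sup>2))) / (DD R u * DD R u)) (at w)"
    using p unfolding u_def by (intro DERIV_divide) auto
  moreover have "(0 * DD R u - pi * ((- NN R u) * inverse (pi * MM R u / (DD R u)\<^sup>2))) / (DD R u * DD R u)
      = NN R u / MM R u"
    using p by (simp add: field_simps power2_eq_square)
  ultimately show ?thesis unfolding YY_def[abs_def] u_def by simp
qed

lemma gF_eq:
  assumes R: "R > 1" and y: "y > 0" and w: "w \<ge> 0"
  shows "gF R w y = NN R (w / y) / MM R (w / y)"
proof -
  have e: "w / (R * y) = (w / y) / R" by simp
  show ?thesis
  proof (cases "w \<le> y")
    case True
    hence "w / y \<le> 1" using y by simp
    thus ?thesis using True y w unfolding gF_def ind_le_def NN_def MM_def e by simp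
  next
    case False
    hence "\<not> w / y \<le> 1" using y by simp
    thus ?thesis using False y w unfolding gF_def ind_le_def NN_def MM_def e by simp
  qed
qed

lemma YY_sol:
  assumes R: "R > 1"
  shows "g_solution R (YY R)"
  unfolding g_solution_def
proof safe
  have "UU R 0 = 0" using UU_WW[OF R, of 0] R by simp
  thus "YY R 0 = pi / (R - 1)" by (simp add: YY_def DD_0)
next
  fix w :: real assume w: "0 \<le> w"
  have "gF R w (YY R w) = NN R (UU R w) / MM R (UU R w)"
    using gF_eq[OF R YY_pos[OF R w] w] YY_ratio[OF R w] by simp
  thus "(YY R has_real_derivative gF R w (YY R w)) (at w within {0..})"
    using YY_deriv[OF R w] by (simp add: has_field_derivative_at_within)
qed




lemma alg0: fixes a M N x :: real assumes "a > 0" "M > 0"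
  shows "(N / M) * (M - (x / a) * N) + (- N) * ((1 * a - x * (N / M)) / (a * a)) * a = 0"
  using assms by (simp add: field_simps)

lemma sol_deriv0:
  assumes R: "R > 1" and sol: "g_solution R y" and v: "0 \<le> v" and P: "0 < y v" "v < R * y v"
  shows "((\<lambda>v. y v * DD R (v / y v)) has_real_derivative 0) (at v within {0..})"
proof -
  have yd: "(y has_real_derivative gF R v (y v)) (at v within {0..})"
    using sol v unfolding g_solution_def by auto
  have u: "-1 < v / y v" "v / y v < R" using P v by (auto simp: field_simps)
  have u0: "0 \<le> v / y v" using P v by simp
  define y' where "y' = gF R v (y v)"
  have y': "y' = NN R (v / y v) / MM R (v / y v)" using gF_eq[OF R P(1) v] unfolding y'_def .
  have du: "((\<lambda>v. v / y v) has_real_derivative (1 * y v - v * y') / (y v * y v)) (at v within {0..})"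
    using P(1) unfolding y'_def by (intro DERIV_divide[OF DERIV_ident yd]) auto
  have dD: "((\<lambda>v. DD R (v / y v)) has_real_derivative (- NN R (v / y v)) * ((1 * y v - v * y') / (y v * y v))) (at v within {0..})"
    by (rule DERIV_chain2[OF DD_deriv[OF R u] du])
  have "((\<lambda>v. y v * DD R (v / y v)) has_real_derivative
     y' * DD R (v / y v) + (- NN R (v / y v)) * ((1 * y v - v * y') / (y v * y v)) * y v) (at v within {0..})"
    using DERIV_mult[OF yd dD] unfolding y'_def .
  moreover have "y' * DD R (v / y v) + (- NN R (v / y v)) * ((1 * y v - v * y') / (y v * y v)) * y v = 0"
  proof -
    have M: "MM R (v / y v) > 0" using MM_pos[OF R u] .
    show ?thesis unfolding y' DD_eq[OF R] using alg0[OF P(1) M, of "NN R (v / y v)" v] by simp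
  qed
  ultimately show ?thesis by simp
qed

lemma sol_const:
  assumes R: "R > 1" and sol: "g_solution R y" and S: "S \<subseteq> {0..}" "convex S" "0 \<in> S"
    and P: "\<And>v. v \<in> S \<Longrightarrow> 0 < y v \<and> v < R * y v"
  shows "\<forall>v\<in>S. y v * DD R (v / y v) = pi"
proof -
  have "\<exists>c. \<forall>v\<in>S. y v * DD R (v / y v) = c"
  proof (rule has_field_derivative_zero_constant[OF S(2)])
    fix v assume v: "v \<in> S"
    show "((\<lambda>v. y v * DD R (v / y v)) has_real_derivative 0) (at v within S)"
      by (rule DERIV_subset[OF sol_deriv0[OF R sol _ conjunct1[OF P[OF v]] conjunct2[OF P[OF v]]] S(1)])
         (use v S in auto)
  qed
  then obtain c where c: "\<forall>v\<in>S. y v * DD R (v / y v) = c" by blast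
  have "y 0 = pi / (R - 1)" using sol unfolding g_solution_def by auto
  hence "y 0 * DD R (0 / y 0) = pi" using R by (simp add: DD_0)
  thus ?thesis using c S(3) by auto
qed

lemma sol_cont:
  assumes sol: "g_solution R y" and m: "0 < m"
  shows "isCont y m"
proof -
  have "(y has_real_derivative gF R m (y m)) (at m within {0..})"
    using sol m unfolding g_solution_def by auto
  hence "(y has_real_derivative gF R m (y m)) (at m within {0<..})"
    by (rule DERIV_subset) auto
  hence "(y has_real_derivative gF R m (y m)) (at m)"
    using at_within_open[of m "{0<..}"] m by simp
  thus ?thesis by (rule DERIV_isCont)
qed

lemma sol_good:
  assumes R: "R > 1" and sol: "g_solution R y" and w: "0 \<le> w"
  shows "\<forall>v\<in>{0..w}. 0 < y v \<and> v < R * y v"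
proof (rule ccontr)
  assume nall: "\<not> (\<forall>v\<in>{0..w}. 0 < y v \<and> v < R * y v)"
  have y0: "y 0 = pi / (R - 1)" using sol unfolding g_solution_def by auto
  hence y0p: "y 0 > 0" using R by simp
  have yc: "continuous_on {0..w} y"
  proof -
    have "continuous_on {0..} y"
      unfolding continuous_on_eq_continuous_within
      using sol unfolding g_solution_def
      by (auto intro: DERIV_continuous)
    thus ?thesis by (rule continuous_on_subset) auto
  qed
  define B where "B = {v \<in> {0..w}. y v \<le> 0} \<union> {v \<in> {0..w}. R * y v \<le> v}"
  have "closed B" unfolding B_def
    by (intro closed_Un continuous_on_closed_Collect_le yc) (auto intro!: continuous_intros yc)
  moreover have "bounded B" unfolding B_def by (rule bounded_subset[OF bounded_closed_interval[of 0 w]]) auto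
  ultimately have "compact B" by (simp add: compact_eq_bounded_closed)
  moreover have "B \<noteq> {}" using nall unfolding B_def by (auto simp: not_less)
  ultimately obtain m where m: "m \<in> B" "\<And>v. v \<in> B \<Longrightarrow> m \<le> v"
    using compact_attains_inf[of B] by auto
  have mw: "0 \<le> m" "m \<le> w" using m(1) unfolding B_def by auto
  have "R * y 0 > 0" using y0p R by simp
  hence "0 \<notin> B" using y0p unfolding B_def by (auto simp: not_le)
  hence "m \<noteq> 0" using m(1) by auto
  hence mpos: "0 < m" using mw by simp
  have good: "0 < y v \<and> v < R * y v" if "0 \<le> v" "v < m" for v
  proof -
    have "v \<notin> B" using m(2)[of v] that by auto
    thus ?thesis using that mw unfolding B_def by auto
  qed
  have const: "\<forall>v\<in>{0..<m}. y v * DD R (v / y v) = pi"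
    by (rule sol_const[OF R sol]) (use good mpos in auto)
  have ylim: "(y \<longlongrightarrow> y m) (at_left m)"
    using sol_cont[OF sol mpos] unfolding isCont_def filterlim_at_split by auto
  have evm: "\<forall>\<^sub>F v in at_left m. v \<in> {0<..<m}"
    using mpos by (intro eventually_at_left_real) auto
  have nb: "at_left m \<noteq> (bot :: real filter)" by (rule trivial_limit_at_left_real)
  have "0 \<le> R * y m - m"
  proof (rule tendsto_lowerbound[OF _ _ nb])
    show "((\<lambda>v. R * y v - v) \<longlongrightarrow> R * y m - m) (at_left m)"
      by (intro tendsto_intros ylim)
    show "\<forall>\<^sub>F v in at_left m. 0 \<le> R * y v - v"
      using evm by (rule eventually_mono) (use good in \<open>auto simp: less_imp_le\<close>)
  qed
  hence mle: "m \<le> R * y m" by simp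
  have ym1: "y m > 0"
  proof (rule ccontr)
    assume "\<not> y m > 0"
    hence "R * y m \<le> 0" using R by (simp add: mult_nonneg_nonpos)
    thus False using mle mpos by simp
  qed
  hence "R * y m \<le> m" using m(1) unfolding B_def by auto
  hence ym: "y m > 0" "R * y m = m" using ym1 mle by auto
  have ulim: "((\<lambda>v. v / y v) \<longlongrightarrow> R) (at_left m)"
  proof -
    have "((\<lambda>v. v / y v) \<longlongrightarrow> m / y m) (at_left m)"
      using ym by (intro tendsto_intros ylim) auto
    moreover have "m / y m = R" using ym by (simp add: field_simps)
    ultimately show ?thesis by simp
  qed
  have "((\<lambda>v. DD R (v / y v)) \<longlongrightarrow> DD R R) (at_left m)"
  proof (rule continuous_on_tendsto_compose[OF DD_cont[OF R] ulim])
    show "R \<in> {-1..R}" using R by auto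
    show "\<forall>\<^sub>F x in at_left m. x / y x \<in> {- 1..R}"
      using evm
    proof (rule eventually_mono)
      fix x assume "x \<in> {0<..<m}"
      hence gx: "0 < y x" "x < R * y x" using good[of x] by auto
      hence "0 \<le> x / y x" "x / y x \<le> R" using \<open>x \<in> {0<..<m}\<close> by (auto simp: field_simps)
      thus "x / y x \<in> {- 1..R}" by auto
    qed
  qed
  hence "((\<lambda>v. y v * DD R (v / y v)) \<longlongrightarrow> y m * 0) (at_left m)"
    using DD_R[OF R] by (intro tendsto_mult ylim) auto
  moreover have "((\<lambda>v. y v * DD R (v / y v)) \<longlongrightarrow> pi) (at_left m)"
  proof (rule tendsto_eventually)
    show "\<forall>\<^sub>F v in at_left m. y v * DD R (v / y v) = pi"
      using evm by (rule eventually_mono) (use const in auto)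
  qed
  ultimately have "y m * 0 = pi" using tendsto_unique[OF nb] by blast
  thus False by simp
qed

lemma sol_unique:
  assumes R: "R > 1" and sol: "g_solution R y" and w: "0 \<le> w"
  shows "y w = YY R w"
proof -
  have good: "\<forall>v\<in>{0..w}. 0 < y v \<and> v < R * y v" by (rule sol_good[OF R sol w])
  have "\<forall>v\<in>{0..w}. y v * DD R (v / y v) = pi"
    by (rule sol_const[OF R sol]) (use good w in auto)
  hence c: "y w * DD R (w / y w) = pi" using w by auto
  have P: "0 < y w" "w < R * y w" using good w by auto
  define u where "u = w / y w"
  have u: "0 \<le> u" "u < R" using P w unfolding u_def by (auto simp: field_simps)
  have Dp: "DD R u > 0" using DD_pos[OF R, of u] u by auto
  have yw: "y w = pi / DD R u" using c Dp unfolding u_def by (simp add: field_simps)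
  have "WW R u = w" using yw P Dp unfolding WW_def u_def by (simp add: field_simps)
  hence "UU R w = u" using UU_WW[OF R, of u] u by auto
  thus ?thesis using yw by (simp add: YY_def)
qed

lemma g_eq:
  assumes R: "R > 1" and w: "0 \<le> w"
  shows "g R w = YY R w"
  unfolding g_def
proof (rule the_equality)
  show "\<exists>y. g_solution R y \<and> y w = YY R w" using YY_sol[OF R] by blast
  show "\<And>v. \<exists>y. g_solution R y \<and> y w = v \<Longrightarrow> v = YY R w"
    using sol_unique[OF R _ w] by blast
qed

lemma s_eq:
  assumes R: "R > 1"
  shows "s R = pi / (R * EE (1 / R))"
proof -
  have D1: "DD R 1 = R * EE (1 / R)" by (simp add: DD_def E1_def)
  have Dp: "DD R 1 > 0" using DD_pos[OF R, of 1] R by simp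
  have "s R = pi / DD R 1"
    unfolding s_def
  proof (rule the_equality)
    have "UU R (WW R 1) = 1" using UU_WW[OF R, of 1] R by simp
    hence "YY R (pi / DD R 1) = pi / DD R 1" by (simp add: YY_def WW_def)
    thus "0 < pi / DD R 1 \<and> g R (pi / DD R 1) = pi / DD R 1"
      using g_eq[OF R, of "pi / DD R 1"] Dp by auto
  next
    fix w assume w: "0 < w \<and> g R w = w"
    hence "YY R w = w" using g_eq[OF R, of w] by auto
    hence "UU R w = 1" using YY_ratio[OF R, of w] w by auto
    thus "w = pi / DD R 1" using \<open>YY R w = w\<close> by (simp add: YY_def)
  qed
  thus ?thesis using D1 by simp
qed


lemma h_mono:
  assumes "1 < R1" "R1 < R2"
  shows "0 < R1 * EE (1 / R1)" "R1 * EE (1 / R1) < R2 * EE (1 / R2)"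
proof -
  have a: "0 < 1 / R2" "1 / R2 < 1 / R1" "1 / R1 < 1" using assms by (auto simp: field_simps)
  have e1: "EE (1 / R1) < EE (1 / R2)" using EE_strict_dec[of "1/R2" "1/R1"] a by auto
  have e0: "0 < EE (1 / R1)" using EE_strict_dec[of "1/R1" 1] a by auto
  show "0 < R1 * EE (1 / R1)" using e0 assms by simp
  show "R1 * EE (1 / R1) < R2 * EE (1 / R2)"
    using e0 e1 assms by (intro mult_strict_mono) auto
qed

lemma h_lower:
  assumes R: "R > 1"
  shows "R - 1 - pi \<le> R * EE (1 / R)"
proof -
  define x where "x = 1 / R"
  have x: "0 < x" "x < 1" using R unfolding x_def by (auto simp: field_simps)
  have "(1 - x)\<^sup>2 \<le> 1 - x\<^sup>2" using x by (simp add: power2_eq_square algebra_simps)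
  hence "1 - x \<le> sqrt (1 - x\<^sup>2)" using x by (metis real_le_rsqrt)
  hence "R * (1 - x) \<le> R * sqrt (1 - x\<^sup>2)" using R by simp
  moreover have "R * (1 - x) = R - 1" using R unfolding x_def by (simp add: field_simps)
  moreover have "R * (x * arccos x) = arccos x" using R unfolding x_def by simp
  hence "R * EE x = R * sqrt (1 - x\<^sup>2) - arccos x" unfolding EE_def by (simp add: right_diff_distrib)
  moreover have "arccos x \<le> pi" using x by (intro arccos_ubound) auto
  ultimately show ?thesis unfolding x_def[symmetric] by linarith
qed

theorem proposition3p2:
  shows "(\<forall>R1 R2. 1 < R1 \<longrightarrow> R1 < R2 \<longrightarrow> s R2 < s R1)
    \<and> filterlim s at_top (at_right 1)
    \<and> (s \<longlongrightarrow> 0) at_top"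
proof (intro conjI allI impI)
  fix R1 R2 :: real assume a: "1 < R1" "R1 < R2"
  show "s R2 < s R1"
    using h_mono[OF a] a s_eq[of R1] s_eq[of R2]
    by (simp add: divide_strict_left_mono)
next
  have "((\<lambda>R. EE (1 / R)) \<longlongrightarrow> EE 1) (at_right 1)"
  proof (rule continuous_on_tendsto_compose[OF EE_cont])
    show "((\<lambda>R::real. 1 / R) \<longlongrightarrow> 1) (at_right 1)"
      by (rule tendsto_eq_intros tendsto_ident_at tendsto_const | simp)+
    show "(1::real) \<in> {-1..1}" by simp
    show "\<forall>\<^sub>F x in at_right 1. 1 / x \<in> {- 1..1::real}"
      by (rule eventually_mono[OF eventually_at_right_less]) (auto simp: field_simps)
  qed
  hence "((\<lambda>R. R * EE (1 / R)) \<longlongrightarrow> 1 * 0) (at_right 1)"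
    by (intro tendsto_mult tendsto_ident_at) auto
  hence hl: "((\<lambda>R. R * EE (1 / R)) \<longlongrightarrow> 0) (at_right 1)" by simp
  have hp: "\<forall>\<^sub>F R in at_right 1. 0 < R * EE (1 / R)"
  proof (rule eventually_mono[OF eventually_at_right_less])
    fix x :: real assume "1 < x"
    thus "0 < x * EE (1 / x)" using h_mono(1)[of x "x + 1"] by simp
  qed
  have L: "filterlim (\<lambda>R. pi * inverse (R * EE (1 / R))) at_top (at_right 1)"
    by (rule filterlim_tendsto_pos_mult_at_top[OF tendsto_const pi_gt_zero filterlim_inverse_at_top[OF hl hp]])
  have ev: "\<forall>\<^sub>F R in at_right 1. pi * inverse (R * EE (1 / R)) = s R"
    by (rule eventually_mono[OF eventually_at_right_less]) (simp add: s_eq divide_inverse)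
  show "filterlim s at_top (at_right 1)"
    using filterlim_cong[OF refl refl ev] L by simp
next
  have "filterlim (\<lambda>R::real. (-1 - pi) + R) at_top at_top"
    by (rule filterlim_tendsto_add_at_top[OF tendsto_const filterlim_ident])
  moreover have "\<forall>\<^sub>F R in at_top. (-1 - pi) + R \<le> R * EE (1 / R)"
    using eventually_gt_at_top[of "1::real"]
    by (rule eventually_mono) (use h_lower in \<open>auto simp: algebra_simps\<close>)
  ultimately have "filterlim (\<lambda>R. R * EE (1 / R)) at_top at_top"
    by (rule filterlim_at_top_mono)
  hence "((\<lambda>R. pi / (R * EE (1 / R))) \<longlongrightarrow> 0) at_top"
    by (intro tendsto_divide_0[OF tendsto_const] filterlim_at_top_imp_at_infinity)
  moreover have "\<forall>\<^sub>F R in at_top. pi / (R * EE (1 / R)) = s R"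
    using eventually_gt_at_top[of "1::real"]
    by (rule eventually_mono) (simp add: s_eq)
  ultimately show "(s \<longlongrightarrow> 0) at_top"
    by (rule tendsto_cong[THEN iffD1, rotated])
qed

end
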